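(* Let $\Gamma_2$ be a finite alphabet and $n\in\mathbb N$. There is a pushdown automaton with $3n+2$ states and stack alphabet consisting of two symbols, in whose runs the stack height never exceeds $n$, whose language is exactly $(\Gamma_2)^{2^n}$ (the set of words over $\Gamma_2$ of length $2^n$).
   Context: A pushdown automaton has transitions labelled by a letter or $\epsilon$ and a stack operation (push a symbol, pop a symbol, or no operation); it accepts a word if there is a run from the initial state with empty stack reading the word and ending in a final state with empty stack. *)

theory Defs
  imports Main
begin

datatype 'g stack_op = Push 'g | Pop 'g | Nop

datatype ('a, 'q, 'g) pda = PDA
  (states: "'q set")
  (sigma: "'a set")
  (gamma: "'g set")
  (trans: "('q \<times> 'a option \<times> 'g stack_op \<times> 'q) set")
  (init: 'q)
  (final: "'q set")

definition wf_pda :: "('a, 'q, 'g) pda \<Rightarrow> bool" where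
  "wf_pda P \<longleftrightarrow> finite (states P) \<and> finite (sigma P) \<and> finite (gamma P)
     \<and> init P \<in> states P \<and> final P \<subseteq> states P
     \<and> (\<forall>(p, a, op, q) \<in> trans P. p \<in> states P \<and> q \<in> states P
          \<and> set_option a \<subseteq> sigma P \<and> set_stack_op op \<subseteq> gamma P)"

fun apply_op :: "'g stack_op \<Rightarrow> 'g list \<Rightarrow> 'g list option" where
  "apply_op (Push g) s = Some (g # s)"
| "apply_op (Pop g) [] = None"
| "apply_op (Pop g) (h # s) = (if h = g then Some s else None)"
| "apply_op Nop s = Some s"

inductive reach :: "('a, 'q, 'g) pda \<Rightarrow> 'q \<times> 'g list \<Rightarrow> 'a list \<Rightarrow> 'q \<times> 'g list \<Rightarrow> bool"
  for P where
  refl: "reach P c [] c"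
| step: "reach P c w (p, s) \<Longrightarrow> (p, a, f, q) \<in> trans P \<Longrightarrow> apply_op f s = Some s'
         \<Longrightarrow> reach P c (w @ (case a of None \<Rightarrow> [] | Some x \<Rightarrow> [x])) (q, s')"

definition pda_lang :: "('a, 'q, 'g) pda \<Rightarrow> 'a list set" where
  "pda_lang P = {w. \<exists>q \<in> final P. reach P (init P, []) w (q, [])}"

definition stack_bounded :: "('a, 'q, 'g) pda \<Rightarrow> nat \<Rightarrow> bool" where
  "stack_bounded P n \<longleftrightarrow> (\<forall>w q s. reach P (init P, []) w (q, s) \<longrightarrow> length s \<le> n)"

end

theory Submission
  imports Defs
begin

lemma reach_trans:
  assumes "reach P c' v c''" "reach P c u c'"
  shows "reach P c (u @ v) c''"
  using assms
proof (induction rule: reach.induct)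
  case (refl c)
  then show ?case by simp
next
  case (step c1 w p s a f q s')
  then have "reach P c (u @ w) (p, s)" by simp
  from reach.step[OF this step(2,3)] show ?case by simp
qed

lemma reach_one:
  assumes "(p, a, f, q) \<in> trans P" "apply_op f s = Some s'"
  shows "reach P (p, s) (case a of None \<Rightarrow> [] | Some x \<Rightarrow> [x]) (q, s')"
  using reach.step[OF reach.refl assms] by simp

definition tr :: "'a set \<Rightarrow> nat \<Rightarrow> (nat \<times> 'a option \<times> nat stack_op \<times> nat) set" where
  "tr G n = {(0, Some a, Nop, n+1) | a. a \<in> G}
    \<union> {(k, None, Push 0, k-1) | k. 1 \<le> k \<and> k \<le> n}
    \<union> {(n+k, None, Pop 0, 2*n+1+k) | k. 1 \<le> k \<and> k \<le> n}
    \<union> {(2*n+1+k, None, Push 1, k-1) | k. 1 \<le> k \<and> k \<le> n}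
    \<union> {(n+k, None, Pop 1, n+1+k) | k. 1 \<le> k \<and> k \<le> n}"

definition thePDA :: "'a set \<Rightarrow> nat \<Rightarrow> ('a, nat, nat) pda" where
  "thePDA G n = PDA {0..3*n+1} G {0,1} (tr G n) n {2*n+1}"

fun val :: "nat \<Rightarrow> nat list \<Rightarrow> nat" where
  "val k [] = 0"
| "val k (b # s) = b * 2^k + val (Suc k) s"

definition inv :: "'a set \<Rightarrow> nat \<Rightarrow> 'a list \<Rightarrow> nat \<Rightarrow> nat list \<Rightarrow> bool" where
  "inv G n w q s \<longleftrightarrow> set w \<subseteq> G \<and> set s \<subseteq> {0,1} \<and>
     ((\<exists>k\<le>n. q = k \<and> length s = n - k \<and> length w = val k s)
    \<or> (\<exists>k\<le>n. q = n+1+k \<and> length s = n - k \<and> length w = val k s + 2^k)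
    \<or> (\<exists>k. 1 \<le> k \<and> k \<le> n \<and> q = 2*n+1+k \<and> length s = n - k \<and> length w = val k s + 2^(k-1)))"

lemma complete:
  assumes "set w \<subseteq> G" "length w = 2^k" "k \<le> n"
  shows "reach (thePDA G n) (k, s) w (n+1+k, s)"
  using assms
proof (induction k arbitrary: w s)
  case 0
  then obtain a where w: "w = [a]" by (cases w) auto
  with 0 have "(0, Some a, Nop, n+1) \<in> trans (thePDA G n)"
    by (auto simp: thePDA_def tr_def)
  from reach_one[OF this] w show ?case by simp
next
  case (Suc k)
  define u where "u = take (2^k) w"
  define v where "v = drop (2^k) w"
  have w: "w = u @ v" by (simp add: u_def v_def)
  have lu: "length u = 2^k" "length v = 2^k" using Suc.prems by (auto simp: u_def v_def)
  have su: "set u \<subseteq> G" "set v \<subseteq> G" using Suc.prems w by auto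
  let ?P = "thePDA G n"
  have t1: "(Suc k, None, Push 0, k) \<in> trans ?P"
    using Suc.prems by (auto simp: thePDA_def tr_def)
  have t2: "(n+1+k, None, Pop 0, 2*n+1+Suc k) \<in> trans ?P"
    using Suc.prems unfolding thePDA_def tr_def by auto
  have t3: "(2*n+1+Suc k, None, Push 1, k) \<in> trans ?P"
    using Suc.prems unfolding thePDA_def tr_def by auto
  have t4: "(n+1+k, None, Pop 1, n+1+Suc k) \<in> trans ?P"
    using Suc.prems unfolding thePDA_def tr_def by auto
  have r1: "reach ?P (Suc k, s) [] (k, 0#s)" using reach_one[OF t1] by simp
  have r2: "reach ?P (k, 0#s) u (n+1+k, 0#s)" using Suc.IH[OF su(1) lu(1)] Suc.prems by simp
  have r3: "reach ?P (n+1+k, 0#s) [] (2*n+1+Suc k, s)" using reach_one[OF t2] by simp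
  have r4: "reach ?P (2*n+1+Suc k, s) [] (k, 1#s)" using reach_one[OF t3] by simp
  have r5: "reach ?P (k, 1#s) v (n+1+k, 1#s)" using Suc.IH[OF su(2) lu(2)] Suc.prems by simp
  have r6: "reach ?P (n+1+k, 1#s) [] (n+1+Suc k, s)" using reach_one[OF t4] by simp
  have "reach ?P (Suc k, s) ([] @ u @ [] @ [] @ v @ []) (n+1+Suc k, s)"
    using reach_trans[OF r6 reach_trans[OF r5 reach_trans[OF r4 reach_trans[OF r3 reach_trans[OF r2 r1]]]]] by simp
  then show ?case using w by simp
qed

lemma invE: "set w \<subseteq> G \<Longrightarrow> set s \<subseteq> {0,1} \<Longrightarrow> k \<le> n \<Longrightarrow> length s = n - k
  \<Longrightarrow> length w = val k s \<Longrightarrow> inv G n w k s"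
  unfolding inv_def by blast

lemma invR: "set w \<subseteq> G \<Longrightarrow> set s \<subseteq> {0,1} \<Longrightarrow> k \<le> n \<Longrightarrow> length s = n - k
  \<Longrightarrow> length w = val k s + 2^k \<Longrightarrow> inv G n w (n+1+k) s"
  unfolding inv_def by blast

lemma invM: "set w \<subseteq> G \<Longrightarrow> set s \<subseteq> {0,1} \<Longrightarrow> 1 \<le> k \<Longrightarrow> k \<le> n \<Longrightarrow> length s = n - k
  \<Longrightarrow> length w = val k s + 2^(k-1) \<Longrightarrow> inv G n w (2*n+1+k) s"
  unfolding inv_def by blast

lemma sound0:
  assumes "reach (thePDA G n) c w c'" "c = (n, [])"
  shows "inv G n w (fst c') (snd c')"
  using assms
proof (induction rule: reach.induct)
  case refl
  then show ?case by (auto simp: inv_def)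
next
  case (step c w p s0 a f q s')
  have IH: "inv G n w p s0" using step by simp
  from step.hyps(2) have tr: "(p, a, f, q) \<in> tr G n" by (simp add: thePDA_def)
  from tr consider
      (c1) b where "p = 0" "a = Some b" "f = Nop" "q = Suc n" "b \<in> G"
    | (c2) k where "p = k" "a = None" "f = Push 0" "q = k - 1" "1 \<le> k" "k \<le> n"
    | (c3) k where "p = n + k" "a = None" "f = Pop 0" "q = 2*n+1+k" "1 \<le> k" "k \<le> n"
    | (c4) k where "p = 2*n+1+k" "a = None" "f = Push 1" "q = k - 1" "1 \<le> k" "k \<le> n"
    | (c5) k where "p = n + k" "a = None" "f = Pop 1" "q = n+1+k" "1 \<le> k" "k \<le> n"
    unfolding tr_def by auto
  then show ?case
  proof cases
    case (c1 b)
    note h = c1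
    with step.hyps(3) have s: "s' = s0" by simp
    have F: "set w \<subseteq> G \<and> set s0 \<subseteq> {0,1} \<and> length s0 = n \<and> length w = val 0 s0"
      using IH h unfolding inv_def by auto
    have "inv G n (w @ [b]) (n+1+0) s0"
      by (rule invR) (use F h in auto)
    with h s show ?thesis by simp
  next
    case (c2 k)
    note h = c2
    with step.hyps(3) have s: "s' = 0 # s0" by simp
    have F: "set w \<subseteq> G \<and> set s0 \<subseteq> {0,1} \<and> length s0 = n - k \<and> length w = val k s0"
      using IH h unfolding inv_def by auto
    have "inv G n w (k-1) (0 # s0)"
      by (rule invE) (use F h in auto)
    with h s show ?thesis by simp
  next
    case (c3 k)
    note h = c3
    with step.hyps(3) obtain t where t: "s0 = 0 # t" "s' = t"
      by (cases s0) (auto split: if_splits)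
    have F: "set w \<subseteq> G \<and> set s0 \<subseteq> {0,1} \<and> length s0 = n - (k-1) \<and> length w = val (k-1) s0 + 2^(k-1)"
      using IH h unfolding inv_def by auto
    have v: "val (k-1) (0 # t) = val k t" using h by simp
    have "inv G n w (2*n+1+k) t"
      by (rule invM) (use F h t v in auto)
    with h t show ?thesis by simp
  next
    case (c4 k)
    note h = c4
    with step.hyps(3) have s: "s' = 1 # s0" by simp
    have F: "set w \<subseteq> G \<and> set s0 \<subseteq> {0,1} \<and> length s0 = n - k \<and> length w = val k s0 + 2^(k-1)"
      using IH h unfolding inv_def by auto
    have v: "val (k-1) (1 # s0) = 2^(k-1) + val k s0" using h by simp
    have "inv G n w (k-1) (1 # s0)"
      by (rule invE) (use F h v in auto)
    with h s show ?thesis by simp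
  next
    case (c5 k)
    note h = c5
    with step.hyps(3) obtain t where t: "s0 = 1 # t" "s' = t"
      by (cases s0) (auto split: if_splits)
    have F: "set w \<subseteq> G \<and> set s0 \<subseteq> {0,1} \<and> length s0 = n - (k-1) \<and> length w = val (k-1) s0 + 2^(k-1)"
      using IH h unfolding inv_def by auto
    have v: "val (k-1) (1 # t) = 2^(k-1) + val k t" using h by simp
    have p2: "(2::nat)^k = 2^(k-1) + 2^(k-1)" using h
      by (metis Suc_diff_1 less_le_trans mult_2 power_Suc zero_less_one)
    have "inv G n w (n+1+k) t"
      by (rule invR) (use F h t v p2 in auto)
    with h t show ?thesis by simp
  qed
qed

lemma sound:
  assumes "reach (thePDA G n) (n, []) w (q, s)"
  shows "inv G n w q s"
  using sound0[OF assms] by simp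

theorem claim4p5:
  fixes \<Gamma> :: "'a set" and n :: nat
  assumes "finite \<Gamma>"
  shows "\<exists>P :: ('a, nat, nat) pda. wf_pda P \<and> sigma P = \<Gamma>
           \<and> card (states P) = 3 * n + 2 \<and> card (gamma P) = 2
           \<and> stack_bounded P n
           \<and> pda_lang P = {w. set w \<subseteq> \<Gamma> \<and> length w = 2 ^ n}"
proof (intro exI conjI)
  let ?P = "thePDA \<Gamma> n"
  show "wf_pda ?P" using assms
    unfolding wf_pda_def thePDA_def tr_def by auto
  show "sigma ?P = \<Gamma>" by (simp add: thePDA_def)
  show "card (states ?P) = 3 * n + 2" by (simp add: thePDA_def)
  show "card (gamma ?P) = 2" by (simp add: thePDA_def)
  show "stack_bounded ?P n" unfolding stack_bounded_def
  proof (intro allI impI)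
    fix w q s assume "reach ?P (init ?P, []) w (q, s)"
    then have "inv \<Gamma> n w q s" using sound by (simp add: thePDA_def) 
    then show "length s \<le> n" unfolding inv_def by auto
  qed
  show "pda_lang ?P = {w. set w \<subseteq> \<Gamma> \<and> length w = 2 ^ n}"
  proof (rule set_eqI, rule iffI)
    fix w assume "w \<in> pda_lang ?P"
    then have "reach ?P (n, []) w (2*n+1, [])" by (simp add: pda_lang_def thePDA_def)
    then have "inv \<Gamma> n w (2*n+1) []" by (rule sound)
    then show "w \<in> {w. set w \<subseteq> \<Gamma> \<and> length w = 2^n}" unfolding inv_def by auto
  next
    fix w assume "w \<in> {w. set w \<subseteq> \<Gamma> \<and> length w = 2^n}"
    then have "set w \<subseteq> \<Gamma>" "length w = 2^n" by auto
    from complete[OF this] have "reach ?P (n, []) w (2*n+1, [])" by (simp add: mult_2)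
    then show "w \<in> pda_lang ?P" by (simp add: pda_lang_def thePDA_def)
  qed
qed

end
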